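(* Let $p$ be a prime and let $\theta\in\mathbb{F}_p((X^{-1}))$ be a counterexample to the $X$-adic Littlewood conjecture over $\mathbb{F}_p$ with finite deficiency $D(\theta)\in\mathbb{N}_0$, i.e. for every $r\ge0$ all partial quotients $A^{(r)}_j$ of the simple continued fraction expansion of $\langle X^r\theta\rangle$ satisfy $\deg(A^{(r)}_j)\le D(\theta)+1$. Then for every $m>D(\theta)$ the three $\mathbb{N}\times m$ matrices $I^{(m)}$, $H^{(m)}(\theta)$ and $J^{(m)}$ generate a digital $(D(\theta),m,3)$-net over $\mathbb{F}_p$.
   Context: $\mathbb{F}_p((X^{-1}))$ is the field of formal Laurent series $\theta=\sum_{i=j}^\infty a_iX^{-i}$ over $\mathbb{F}_p$, with $|\theta|=2^{-j}$ for $a_j\ne0$, fractional part $\langle\theta\rangle=\sum_{i\ge\max\{1,j\}}a_iX^{-i}$, $\|\theta\|=|\langle\theta\rangle|$; $\theta$ is a counterexample to the $X$-adic Littlewood conjecture if $\inf_{r\ge0,Q\in\mathbb{F}_p[X]\setminus\{0\}}|Q|\cdot\|X^rQ\theta\|>0$. Matrices (rows indexed by $1,2,\dots$, columns by $0,\dots,m-1$): $I^{(m)}$ has entry $1$ in row $k$, column $k-1$ and $0$ elsewhere; $H^{(m)}(\theta)$ has entry $a_{k+l}$ in row $k$, column $l$ (with $a_i=0$ for $1\le i<j$); $J^{(m)}$ is the upper antidiagonal matrix with entry $1$ in row $k$, column $m-k$ for $1\le k\le m$ and $0$ elsewhere. Digital point set: for $0\le n<p^m$ with base-$p$ digits $\vec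 n=(n_0,\dots,n_{m-1})^T$, compute $C_i\vec n=(y^{(i)}_1,y^{(i)}_2,\dots)^T$ mod $p$ and set $x^{(i)}_n=\sum_k y^{(i)}_kp^{-k}$. It is a digital $(t,m,3)$-net over $\mathbb{F}_p$ ($0\le t<m$) if for all $d_1,d_2,d_3\in\mathbb{N}_0$ with $d_1+d_2+d_3\le m-t$ the matrix formed by the upper $d_1$ rows of $C_1$, the upper $d_2$ rows of $C_2$ and the upper $d_3$ rows of $C_3$ has full row rank $d_1+d_2+d_3$. *)

theory Defs
  imports "HOL-Computational_Algebra.Computational_Algebra" "HOL-Library.Cardinality"
begin

(* Convention: F_p((X^{-1})) is modelled as 'a fls, where 'a is a finite field of
   prime cardinality p, and the formal variable of fls is Y = X^{-1}.
   Hence the coefficient a_i of X^{-i} of theta is  theta $$ i  (i :: int),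
   and X itself is fls_X_inv. *)

definition polyX :: "'a::field poly \<Rightarrow> 'a fls" where
  "polyX Q = poly (map_poly fls_const Q) fls_X_inv"

definition lnorm :: "'a::field fls \<Rightarrow> real" where
  "lnorm f = (if f = 0 then 0 else 2 powr (- real_of_int (fls_subdegree f)))"

definition pnorm :: "'a::field poly \<Rightarrow> real" where
  "pnorm Q = (if Q = 0 then 0 else 2 ^ degree Q)"

definition frac_part :: "'a::field fls \<Rightarrow> 'a fls" where
  "frac_part f = Abs_fls (\<lambda>i. if i \<ge> 1 then fls_nth f (i) else 0)"

definition int_part :: "'a::field fls \<Rightarrow> 'a poly" where
  "int_part f = Poly (map (\<lambda>k. fls_nth f (- int k)) [0..<nat (- fls_subdegree f) + 1])"

definition dist_int :: "'a::field fls \<Rightarrow> real" where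
  "dist_int f = lnorm (frac_part f)"

definition xadic_LC_counterexample :: "'a::field fls \<Rightarrow> bool" where
  "xadic_LC_counterexample \<theta> \<longleftrightarrow>
     (INF rQ \<in> {(r::nat, Q::'a poly). Q \<noteq> 0}.
        pnorm (snd rQ) * dist_int (fls_X_inv ^ fst rQ * polyX (snd rQ) * \<theta>)) > 0"

(* continued fraction algorithm for phi with |phi| < 1:
   phi = [0; A_1, A_2, ...],  t_0 = phi,  A_{k+1} = [1/t_k],  t_{k+1} = <1/t_k>,
   the expansion stopping when t_k = 0 *)
primrec cf_rem :: "'a::field fls \<Rightarrow> nat \<Rightarrow> 'a fls" where
  "cf_rem \<phi> 0 = \<phi>"
| "cf_rem \<phi> (Suc k) = frac_part (inverse (cf_rem \<phi> k))"

(* the j-th partial quotient A_j (j >= 1); only meaningful when cf_rem phi (j-1) \<noteq> 0 *)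
definition partial_quotient :: "'a::field fls \<Rightarrow> nat \<Rightarrow> 'a poly" where
  "partial_quotient \<phi> j = int_part (inverse (cf_rem \<phi> (j - 1)))"

definition pq_bounded :: "'a::field fls \<Rightarrow> nat \<Rightarrow> bool" where
  "pq_bounded \<theta> D \<longleftrightarrow>
     (\<forall>r::nat. \<forall>j\<ge>1. cf_rem (frac_part (fls_X_inv ^ r * \<theta>)) (j - 1) \<noteq> 0 \<longrightarrow>
        degree (partial_quotient (frac_part (fls_X_inv ^ r * \<theta>)) j) \<le> D + 1)"

definition finite_deficiency :: "'a::field fls \<Rightarrow> bool" where
  "finite_deficiency \<theta> \<longleftrightarrow> (\<exists>D. pq_bounded \<theta> D)"

definition deficiency :: "'a::field fls \<Rightarrow> nat" where
  "deficiency \<theta> = (LEAST D. pq_bounded \<theta> D)"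

(* Matrices with rows indexed by 1,2,... and columns by 0..m-1: M k l *)
definition I_mat :: "nat \<Rightarrow> nat \<Rightarrow> nat \<Rightarrow> 'a::field" where
  "I_mat m k l = (if 1 \<le> k \<and> l < m \<and> l = k - 1 then 1 else 0)"

definition H_mat :: "nat \<Rightarrow> 'a::field fls \<Rightarrow> nat \<Rightarrow> nat \<Rightarrow> 'a" where
  "H_mat m \<theta> k l = (if 1 \<le> k \<and> l < m then fls_nth \<theta> (int (k + l)) else 0)"

definition J_mat :: "nat \<Rightarrow> nat \<Rightarrow> nat \<Rightarrow> 'a::field" where
  "J_mat m k l = (if 1 \<le> k \<and> k \<le> m \<and> l = m - k then 1 else 0)"

definition upper_rows_full_rank ::
  "nat \<Rightarrow> (nat \<Rightarrow> nat \<Rightarrow> 'a::field) \<Rightarrow> (nat \<Rightarrow> nat \<Rightarrow> 'a) \<Rightarrow> (nat \<Rightarrow> nat \<Rightarrow> 'a)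
     \<Rightarrow> nat \<Rightarrow> nat \<Rightarrow> nat \<Rightarrow> bool" where
  "upper_rows_full_rank m C1 C2 C3 d1 d2 d3 \<longleftrightarrow>
     (\<forall>c1 c2 c3 :: nat \<Rightarrow> 'a.
        (\<forall>l<m. (\<Sum>k\<in>{1..d1}. c1 k * C1 k l) + (\<Sum>k\<in>{1..d2}. c2 k * C2 k l)
                + (\<Sum>k\<in>{1..d3}. c3 k * C3 k l) = 0)
        \<longrightarrow> (\<forall>k\<in>{1..d1}. c1 k = 0) \<and> (\<forall>k\<in>{1..d2}. c2 k = 0) \<and> (\<forall>k\<in>{1..d3}. c3 k = 0))"

definition digital_net3 ::
  "nat \<Rightarrow> nat \<Rightarrow> (nat \<Rightarrow> nat \<Rightarrow> 'a::field) \<Rightarrow> (nat \<Rightarrow> nat \<Rightarrow> 'a) \<Rightarrow> (nat \<Rightarrow> nat \<Rightarrow> 'a) \<Rightarrow> bool" where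
  "digital_net3 t m C1 C2 C3 \<longleftrightarrow> t < m \<and>
     (\<forall>d1 d2 d3. d1 + d2 + d3 \<le> m - t \<longrightarrow> upper_rows_full_rank m C1 C2 C3 d1 d2 d3)"

end

theory Submission
  imports Defs
begin
unbundle fps_syntax
notation fls_nth (infixl \<open>$$\<close> 75)

definition integ :: "'a::field fls \<Rightarrow> bool" where
  "integ f \<longleftrightarrow> (\<forall>i\<ge>1. f $$ i = 0)"

lemma frac_nth: "frac_part f $$ i = (if i \<ge> 1 then f $$ i else 0)"
  unfolding frac_part_def
  by (subst nth_Abs_fls) (auto simp: MOST_nat)

lemma frac_add: "frac_part (f + g) = frac_part f + frac_part g"
  by (rule fls_eqI) (simp add: frac_nth)
lemma frac_diff: "frac_part (f - g) = frac_part f - frac_part g"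
  by (rule fls_eqI) (simp add: frac_nth)
lemma frac_uminus: "frac_part (- f) = - frac_part f"
  by (rule fls_eqI) (simp add: frac_nth)
lemma frac_integ: "integ f \<Longrightarrow> frac_part f = 0"
  by (rule fls_eqI) (simp add: frac_nth integ_def)
lemma integ_sub_frac: "integ (f - frac_part f)"
  by (simp add: integ_def frac_nth)
lemma frac_frac: "frac_part (frac_part f) = frac_part f"
  by (rule fls_eqI) (simp add: frac_nth)
lemma integ_diff: "integ f \<Longrightarrow> integ g \<Longrightarrow> integ (f - g)"
  by (simp add: integ_def)
lemma integ_mult:
  fixes f g :: "'a::field fls"
  assumes "integ f" "integ g" shows "integ (f * g)"
  unfolding integ_def
proof (intro allI impI)
  fix n :: int assume n: "n \<ge> 1"
  show "(f * g) $$ n = 0"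
    unfolding fls_times_nth(2)
  proof (rule sum.neutral, intro ballI)
    fix i assume "i \<in> {fls_subdegree f..n - fls_subdegree g}"
    show "f $$ i * g $$ (n - i) = 0"
      using assms n unfolding integ_def
      by (cases "i \<ge> 1") auto
  qed
qed

lemma frac_low: "(\<And>i. i \<le> 0 \<Longrightarrow> f $$ i = 0) \<Longrightarrow> frac_part f = f"
  by (rule fls_eqI) (auto simp: frac_nth)

lemma below_subdeg: "n < fls_subdegree f \<Longrightarrow> f $$ n = 0"
  using fls_subdegree_leI by force

lemma frac_pos: "fls_subdegree f \<ge> 1 \<Longrightarrow> frac_part f = f"
  by (rule frac_low) (auto intro: below_subdeg)

lemma frac_subdeg: "frac_part f \<noteq> 0 \<Longrightarrow> fls_subdegree (frac_part f) \<ge> 1"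
  by (rule fls_subdegree_geI) (auto simp: frac_nth)

lemma integ_subdeg: "integ f \<Longrightarrow> f \<noteq> 0 \<Longrightarrow> fls_subdegree f \<le> 0"
  using nth_fls_subdegree_nonzero[of f] unfolding integ_def
  by (metis not_le zero_less_iff_neq_zero int_one_le_iff_zero_less)

lemma degree_int_part:
  fixes f :: "'a::field fls"
  assumes "f \<noteq> 0" "fls_subdegree f \<le> 0"
  shows "degree (int_part f) = nat (- fls_subdegree f)"
proof -
  define N where "N = nat (- fls_subdegree f)"
  have c: "coeff (int_part f) k = (if k \<le> N then f $$ (- int k) else 0)" for k
    unfolding int_part_def N_def[symmetric]
    by (auto simp: nth_default_def simp del: upt_Suc)
  have "coeff (int_part f) N \<noteq> 0"
    using assms c[of N] by (simp add: N_def)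
  hence "N \<le> degree (int_part f)" by (rule le_degree)
  moreover have "degree (int_part f) \<le> N"
    by (rule degree_le) (simp add: c)
  ultimately show ?thesis by (simp add: N_def)
qed

lemma cf_rem_shift: "cf_rem (frac_part (inverse \<phi>)) k = cf_rem \<phi> (Suc k)"
  by (induction k) auto

lemma key:
  fixes \<phi> Q :: "'a::field fls"
  shows "nat (- fls_subdegree Q) = n \<Longrightarrow> frac_part \<phi> = \<phi> \<Longrightarrow> integ Q \<Longrightarrow> Q \<noteq> 0
   \<Longrightarrow> frac_part (Q * \<phi>) \<noteq> 0
   \<Longrightarrow> (\<forall>j\<ge>1. cf_rem \<phi> (j-1) \<noteq> 0 \<longrightarrow> degree (partial_quotient \<phi> j) \<le> D+1)
   \<Longrightarrow> fls_subdegree (frac_part (Q * \<phi>)) \<le> - fls_subdegree Q + int D + 1"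
proof (induction n arbitrary: \<phi> Q rule: less_induct)
  case (less n \<phi> Q)
  note hyp = less.prems
  have phi0: "\<phi> \<noteq> 0" using hyp(5) by (auto simp: frac_integ integ_def)
  define a where "a = fls_subdegree \<phi>"
  have a1: "a \<ge> 1" using frac_subdeg[of \<phi>] hyp(2) phi0 by (simp add: a_def)
  have "degree (partial_quotient \<phi> 1) \<le> D + 1" using hyp(6) phi0 by auto
  moreover have "degree (partial_quotient \<phi> 1) = nat a"
    unfolding partial_quotient_def using phi0 a1
    by (simp add: degree_int_part a_def)
  ultimately have aD: "a \<le> int D + 1" using a1 by linarith
  have vQ: "fls_subdegree Q \<le> 0" using integ_subdeg hyp(3,4) by blast
  have Qphi0: "Q * \<phi> \<noteq> 0" using phi0 hyp(4) by simp
  have vQphi: "fls_subdegree (Q * \<phi>) = fls_subdegree Q + a"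
    using phi0 hyp(4) by (simp add: a_def)
  show ?case
  proof (cases "- fls_subdegree Q < a")
    case True
    hence "frac_part (Q * \<phi>) = Q * \<phi>" using vQphi by (intro frac_pos) simp
    thus ?thesis using vQphi vQ aD by simp
  next
    case False
    define \<epsilon> where "\<epsilon> = frac_part (Q * \<phi>)"
    define P where "P = Q * \<phi> - \<epsilon>"
    define \<psi> where "\<psi> = inverse \<phi>"
    define \<phi>' where "\<phi>' = frac_part \<psi>"
    define A where "A = \<psi> - \<phi>'"
    show ?thesis
    proof (cases "fls_subdegree \<epsilon> \<le> a")
      case True
      thus ?thesis using aD vQ by (simp add: \<epsilon>_def)
    next
      case eps: False
      have e0: "\<epsilon> \<noteq> 0" using hyp(5) by (simp add: \<epsilon>_def)
      have Pn: "P $$ (fls_subdegree Q + a) \<noteq> 0"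
        using False Qphi0 nth_fls_subdegree_nonzero[of "Q*\<phi>"] vQphi
        by (simp add: P_def \<epsilon>_def frac_nth)
      have Pz: "P $$ k = 0" if "k < fls_subdegree Q + a" for k
        using that False vQphi below_subdeg[of k "Q*\<phi>"]
        by (simp add: P_def \<epsilon>_def frac_nth)
      have vP: "fls_subdegree P = fls_subdegree Q + a"
        by (rule fls_subdegree_eqI[OF Pn Pz])
      have P0: "P \<noteq> 0" using Pn by auto
      have iP: "integ P" unfolding P_def \<epsilon>_def by (rule integ_sub_frac)
      have lt: "nat (- fls_subdegree P) < n"
        using vP a1 False hyp(1) by linarith
      have fphi': "frac_part \<phi>' = \<phi>'" by (simp add: \<phi>'_def frac_frac)
      have iA: "integ A" unfolding A_def \<phi>'_def by (rule integ_sub_frac)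
      have eq: "P * \<phi>' = Q - P * A - \<epsilon> * \<psi>"
      proof -
        have "P * \<phi>' = P * \<psi> - P * A" by (simp add: A_def algebra_simps)
        also have "P * \<psi> = Q - \<epsilon> * \<psi>"
          using phi0 by (simp add: P_def \<psi>_def algebra_simps)
        finally show ?thesis by simp
      qed
      have psi0: "\<psi> \<noteq> 0" using phi0 by (simp add: \<psi>_def)
      have vep: "fls_subdegree (\<epsilon> * \<psi>) = fls_subdegree \<epsilon> - a"
        using e0 psi0 by (simp add: \<psi>_def a_def)
      have fep: "frac_part (\<epsilon> * \<psi>) = \<epsilon> * \<psi>"
        using vep eps by (intro frac_pos) simp
      have fPphi: "frac_part (P * \<phi>') = - (\<epsilon> * \<psi>)"
        unfolding eq frac_diff fep
        using frac_integ[OF hyp(3)] frac_integ[OF integ_mult[OF iP iA]] by simp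
      have nz: "frac_part (P * \<phi>') \<noteq> 0" using fPphi e0 psi0 by simp
      have cf: "\<forall>j\<ge>1. cf_rem \<phi>' (j-1) \<noteq> 0 \<longrightarrow> degree (partial_quotient \<phi>' j) \<le> D+1"
      proof (intro allI impI)
        fix j :: nat assume j: "j \<ge> 1" "cf_rem \<phi>' (j-1) \<noteq> 0"
        have e: "cf_rem \<phi>' (j-1) = cf_rem \<phi> (Suc j - 1)"
          using j cf_rem_shift[of \<phi> "j-1"] by (simp add: \<phi>'_def \<psi>_def)
        have "partial_quotient \<phi>' j = partial_quotient \<phi> (Suc j)"
          unfolding partial_quotient_def e ..
        thus "degree (partial_quotient \<phi>' j) \<le> D+1"
          using hyp(6)[rule_format, of "Suc j"] j e by simp
      qed
      have IH: "fls_subdegree (frac_part (P * \<phi>')) \<le> - fls_subdegree P + int D + 1"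
        using less.IH[OF lt refl fphi' iP P0 nz cf] .
      hence "fls_subdegree \<epsilon> - a \<le> - fls_subdegree P + int D + 1"
        using fPphi vep by (simp add: fls_subdegree_minus)
      thus ?thesis using vP by (simp add: \<epsilon>_def)
    qed
  qed
qed

lemma map_poly_fls_const_add:
  "map_poly fls_const (p + q) = map_poly fls_const p + (map_poly fls_const q :: 'a::field fls poly)"
  by (rule poly_eqI) (simp add: coeff_map_poly fls_plus_const)

lemma polyX_sum:
  "polyX (\<Sum>k\<in>K. monom (c k) (e k)) = (\<Sum>k\<in>K. fls_const (c k) * fls_X_inv ^ e k :: 'a::field fls)"
proof (induction K rule: infinite_finite_induct)
  case (insert x F)
  thus ?case
    by (simp add: polyX_def map_poly_fls_const_add poly_monom map_poly_monom)
qed (simp_all add: polyX_def)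

lemma X_shift_nth: "(fls_X_inv ^ n * f) $$ i = f $$ (i + int n)"
  by (simp add: fls_X_inv_power_times_conv_shift)

lemma sum_delta_nat:
  fixes c :: "nat \<Rightarrow> 'a::field"
  assumes "k \<in> K" "finite K"
  shows "(\<Sum>k'\<in>K. c k' * (if k' = k then 1 else 0)) = c k"
  using assms by (simp add: if_distrib sum.delta cong: if_cong)

theorem lemma4:
  fixes \<theta> :: "'a::{field,finite} fls" and p m :: nat
  assumes "prime p" and "CARD('a) = p"
    and "xadic_LC_counterexample \<theta>"
    and "finite_deficiency \<theta>"
    and "m > deficiency \<theta>"
  shows "digital_net3 (deficiency \<theta>) m (I_mat m) (H_mat m \<theta>) (J_mat m)"
proof -
  define D where "D = deficiency \<theta>"
  have pq: "pq_bounded \<theta> D"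
    using assms(4) unfolding D_def deficiency_def finite_deficiency_def by (rule LeastI_ex)
  have Dm: "D < m" using assms(5) by (simp add: D_def)
  have LC: "frac_part (fls_X_inv ^ r * polyX Q * \<theta>) \<noteq> 0" if "Q \<noteq> 0" for r Q
  proof
    assume z: "frac_part (fls_X_inv ^ r * polyX Q * \<theta>) = 0"
    let ?S = "{(r::nat, Q::'a poly). Q \<noteq> 0}"
    let ?f = "\<lambda>rQ. pnorm (snd rQ) * dist_int (fls_X_inv ^ fst rQ * polyX (snd rQ) * \<theta>)"
    have bdd: "bdd_below (?f ` ?S)"
      by (rule bdd_belowI[of _ 0])
         (auto simp: pnorm_def dist_int_def lnorm_def intro!: mult_nonneg_nonneg)
    have "(INF rQ \<in> ?S. ?f rQ) \<le> ?f (r, Q)"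
      by (rule cINF_lower[OF bdd]) (use that in auto)
    also have "?f (r, Q) = 0" using z by (simp add: dist_int_def lnorm_def)
    finally show False using assms(3) unfolding xadic_LC_counterexample_def by simp
  qed
  show ?thesis
    unfolding D_def[symmetric] digital_net3_def
  proof (intro conjI allI impI Dm)
    fix d1 d2 d3 assume dd: "d1 + d2 + d3 \<le> m - D"
    show "upper_rows_full_rank m (I_mat m) (H_mat m \<theta>) (J_mat m) d1 d2 d3"
      unfolding upper_rows_full_rank_def
    proof (intro allI impI)
      fix c1 c2 c3 :: "nat \<Rightarrow> 'a"
      assume col: "\<forall>l<m. (\<Sum>k\<in>{1..d1}. c1 k * I_mat m k l) + (\<Sum>k\<in>{1..d2}. c2 k * H_mat m \<theta> k l)
                + (\<Sum>k\<in>{1..d3}. c3 k * J_mat m k l) = 0"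
      have c2z: "\<forall>k\<in>{1..d2}. c2 k = 0"
      proof (rule ccontr)
        assume "\<not> ?thesis"
        then obtain k0 where k0: "k0 \<in> {1..d2}" "c2 k0 \<noteq> 0" by blast
        define Q where "Q = (\<Sum>k\<in>{1..d2}. monom (c2 k) (k - 1))"
        define QX where "QX = (\<Sum>k\<in>{1..d2}. fls_const (c2 k) * fls_X_inv ^ (k - 1) :: 'a fls)"
        have pQ: "polyX Q = QX" unfolding Q_def QX_def by (rule polyX_sum)
        have QXn: "QX $$ n = (\<Sum>k\<in>{1..d2}. c2 k * (if n = - int (k - 1) then 1 else 0))" for n
          unfolding QX_def fls_nth_sum by simp
        have QXk0: "QX $$ (- int (k0 - 1)) = c2 k0"
        proof -
          have "QX $$ (- int (k0 - 1)) = (\<Sum>k\<in>{1..d2}. c2 k * (if k = k0 then 1 else 0))"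
            unfolding QXn using k0(1) by (intro sum.cong) auto
          also have "\<dots> = c2 k0" using k0(1) by (intro sum_delta_nat) auto
          finally show ?thesis .
        qed
        have QX0: "QX \<noteq> 0" using QXk0 k0(2) by auto
        have Q0: "Q \<noteq> 0" using QX0 pQ by (auto simp: polyX_def)
        have iQ: "integ QX" unfolding integ_def QXn by (auto intro!: sum.neutral)
        have vQ: "- int (d2 - 1) \<le> fls_subdegree QX"
          by (rule fls_subdegree_geI[OF QX0]) (unfold QXn, auto intro!: sum.neutral)
        define \<phi> where "\<phi> = frac_part (fls_X_inv ^ d1 * \<theta>)"
        define R where "R = fls_X_inv ^ d1 * polyX Q * \<theta>"
        have R0: "frac_part R \<noteq> 0" unfolding R_def by (rule LC[OF Q0])
        have fR: "frac_part (QX * \<phi>) = frac_part R"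
        proof -
          define G where "G = fls_X_inv ^ d1 * \<theta> - \<phi>"
          have iG: "integ G" unfolding G_def \<phi>_def by (rule integ_sub_frac)
          have "R = QX * G + QX * \<phi>" by (simp add: R_def pQ G_def algebra_simps)
          thus ?thesis using frac_integ[OF integ_mult[OF iQ iG]] by (simp add: frac_add)
        qed
        have pqphi: "\<forall>j\<ge>1. cf_rem \<phi> (j-1) \<noteq> 0 \<longrightarrow> degree (partial_quotient \<phi> j) \<le> D+1"
          using pq unfolding pq_bounded_def \<phi>_def by blast
        have K: "fls_subdegree (frac_part R) \<le> - fls_subdegree QX + int D + 1"
          using key[OF refl _ iQ QX0 _ pqphi] fR R0 by (simp add: \<phi>_def frac_frac)
        have Rn: "R $$ n = (\<Sum>k\<in>{1..d2}. c2 k * \<theta> $$ (n + int (d1 + (k - 1))))" for n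
        proof -
          have "R = (\<Sum>k\<in>{1..d2}. fls_const (c2 k) * (fls_X_inv ^ (d1 + (k - 1)) * \<theta>))"
            unfolding R_def pQ QX_def sum_distrib_left sum_distrib_right
            by (intro sum.cong refl, simp only: power_add) (simp add: mult_ac)
          thus ?thesis by (simp add: fls_nth_sum X_shift_nth)
        qed
        have Rz: "R $$ n = 0" if n: "1 \<le> n" "n \<le> int d2 + int D" for n
        proof -
          define l where "l = nat n + d1 - 1"
          have lm: "l < m" "d1 \<le> l" "l < m - d3" using n dd Dm by (auto simp: l_def)
          have s1: "(\<Sum>k\<in>{1..d1}. c1 k * I_mat m k l) = 0"
            using lm by (intro sum.neutral) (auto simp: I_mat_def)
          have s3: "(\<Sum>k\<in>{1..d3}. c3 k * J_mat m k l) = 0"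
            using lm by (intro sum.neutral) (auto simp: J_mat_def)
          have s2: "(\<Sum>k\<in>{1..d2}. c2 k * H_mat m \<theta> k l) = R $$ n"
            unfolding Rn using lm n
            by (intro sum.cong refl) (auto simp: H_mat_def l_def algebra_simps)
          show ?thesis using col[rule_format, OF lm(1)] s1 s2 s3 by simp
        qed
        define v where "v = fls_subdegree (frac_part R)"
        have "frac_part R $$ v \<noteq> 0" using R0 by (simp add: v_def)
        hence "v > int d2 + int D" using Rz by (auto simp: frac_nth split: if_splits) (meson not_less)
        moreover have "v \<le> int d2 + int D" using K vQ k0(1) by (simp add: v_def)
        ultimately show False by simp
      qed
      have c1z: "c1 k = 0" if k: "k \<in> {1..d1}" for k
      proof -
        define l where "l = k - 1"
        have lm: "l < m" "l < d1" "d1 + d3 \<le> m" using k dd Dm by (auto simp: l_def)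
        have s1: "(\<Sum>k'\<in>{1..d1}. c1 k' * I_mat m k' l) = c1 k"
        proof -
          have "(\<Sum>k'\<in>{1..d1}. c1 k' * I_mat m k' l) = (\<Sum>k'\<in>{1..d1}. c1 k' * (if k' = k then 1 else 0))"
            using lm k by (intro sum.cong refl) (auto simp: I_mat_def l_def)
          also have "\<dots> = c1 k" using k by (intro sum_delta_nat) auto
          finally show ?thesis .
        qed
        have s2: "(\<Sum>k\<in>{1..d2}. c2 k * H_mat m \<theta> k l) = 0"
          using c2z by (intro sum.neutral) auto
        have s3: "(\<Sum>k\<in>{1..d3}. c3 k * J_mat m k l) = 0"
          using lm by (intro sum.neutral) (auto simp: J_mat_def)
        show ?thesis using col[rule_format, OF lm(1)] s1 s2 s3 by simp
      qed
      have c3z: "c3 k = 0" if k: "k \<in> {1..d3}" for k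
      proof -
        define l where "l = m - k"
        have lm: "l < m" "m - d3 \<le> l" "d1 + d3 \<le> m" "k \<le> m" using k dd Dm by (auto simp: l_def)
        have s3: "(\<Sum>k'\<in>{1..d3}. c3 k' * J_mat m k' l) = c3 k"
        proof -
          have "(\<Sum>k'\<in>{1..d3}. c3 k' * J_mat m k' l) = (\<Sum>k'\<in>{1..d3}. c3 k' * (if k' = k then 1 else 0))"
            using lm k by (intro sum.cong refl) (auto simp: J_mat_def l_def)
          also have "\<dots> = c3 k" using k by (intro sum_delta_nat) auto
          finally show ?thesis .
        qed
        have s2: "(\<Sum>k\<in>{1..d2}. c2 k * H_mat m \<theta> k l) = 0"
          using c2z by (intro sum.neutral) auto
        have s1: "(\<Sum>k\<in>{1..d1}. c1 k * I_mat m k l) = 0"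
          using lm by (intro sum.neutral) (auto simp: I_mat_def)
        show ?thesis using col[rule_format, OF lm(1)] s1 s2 s3 by simp
      qed
      show "(\<forall>k\<in>{1..d1}. c1 k = 0) \<and> (\<forall>k\<in>{1..d2}. c2 k = 0) \<and> (\<forall>k\<in>{1..d3}. c3 k = 0)"
        using c1z c2z c3z by blast
    qed
  qed
qed

end
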